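(* For every odd integer $\Delta \ge 1$ there is a local algorithm that, on every graph $\mathcal{G}=(V,E)$ without isolated nodes, of maximum degree at most $\Delta$, equipped with a port numbering and an orientation (and no colouring, no identifiers), outputs a dominating set $D$ with $|D| \le \Delta\,|D^*|$, where $D^*$ is a minimum dominating set of $\mathcal{G}$.
   Context: Model: a graph $\mathcal{G}=(V,E)$ without isolated nodes is a distributed system; every node runs the same deterministic algorithm. Communication is synchronous: in each round every node receives messages from its neighbours, performs local computation, and sends messages to its neighbours. Each node knows its degree and the global degree bound $\Delta$. A local algorithm is one that terminates after $T$ rounds, where $T$ may depend on $\Delta$ but not on the number of nodes; its output at a node is whether the node belongs to the solution. A port numbering means each node has a fixed ordering of its incident edges, known to it; nodes have no identifiers. An orientation chooses for each edge $\{u,v\}$ exactly one direction, and each node knows which of its incident edges are outgoing and which are incoming. *)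

theory Defs
  imports Main
begin

text \<open>Port numbering pn: node v reaches its neighbours through ports 0..<deg v, pn v i is
  the neighbour at port i. Orientation ori: ori u v means edge {u,v} is directed u to v.\<close>

definition degree :: "('v \<Rightarrow> 'v \<Rightarrow> bool) \<Rightarrow> 'v \<Rightarrow> nat" where
  "degree adj v = card {u. adj v u}"

definition valid_instance ::
  "'v set \<Rightarrow> ('v \<Rightarrow> 'v \<Rightarrow> bool) \<Rightarrow> ('v \<Rightarrow> nat \<Rightarrow> 'v) \<Rightarrow> ('v \<Rightarrow> 'v \<Rightarrow> bool) \<Rightarrow> bool" where
  "valid_instance V adj pn ori \<longleftrightarrow>
     finite V \<and>
     (\<forall>u v. adj u v \<longrightarrow> u \<in> V \<and> v \<in> V \<and> u \<noteq> v \<and> adj v u) \<and>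
     (\<forall>v\<in>V. bij_betw (pn v) {..<degree adj v} {u. adj v u}) \<and>
     (\<forall>u v. adj u v \<longrightarrow> (ori u v \<longleftrightarrow> \<not> ori v u))"

definition port_of :: "('v \<Rightarrow> 'v \<Rightarrow> bool) \<Rightarrow> ('v \<Rightarrow> nat \<Rightarrow> 'v) \<Rightarrow> 'v \<Rightarrow> 'v \<Rightarrow> nat" where
  "port_of adj pn u v = (THE j. j < degree adj u \<and> pn u j = v)"

text \<open>A deterministic synchronous anonymous algorithm running for a fixed number of rounds.
  start receives, for each port in order, whether the edge is outgoing (the list length is
  the degree). In each round a node sends send s i on port i, and then updates its state
  from the list of messages received, indexed by its own port numbers.\<close>
record ('s, 'm) local_alg =
  rounds :: nat
  start :: "bool list \<Rightarrow> 's"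
  send :: "'s \<Rightarrow> nat \<Rightarrow> 'm"
  step :: "'s \<Rightarrow> 'm list \<Rightarrow> 's"
  out :: "'s \<Rightarrow> bool"

primrec run :: "('s, 'm) local_alg \<Rightarrow> ('v \<Rightarrow> 'v \<Rightarrow> bool) \<Rightarrow> ('v \<Rightarrow> nat \<Rightarrow> 'v)
    \<Rightarrow> ('v \<Rightarrow> 'v \<Rightarrow> bool) \<Rightarrow> nat \<Rightarrow> 'v \<Rightarrow> 's" where
  "run A adj pn ori 0 v = start A (map (\<lambda>i. ori v (pn v i)) [0..<degree adj v])"
| "run A adj pn ori (Suc t) v =
     step A (run A adj pn ori t v)
       (map (\<lambda>j. send A (run A adj pn ori t (pn v j)) (port_of adj pn (pn v j) v))
            [0..<degree adj v])"

definition alg_output :: "('s, 'm) local_alg \<Rightarrow> 'v set \<Rightarrow> ('v \<Rightarrow> 'v \<Rightarrow> bool)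
    \<Rightarrow> ('v \<Rightarrow> nat \<Rightarrow> 'v) \<Rightarrow> ('v \<Rightarrow> 'v \<Rightarrow> bool) \<Rightarrow> 'v set" where
  "alg_output A V adj pn ori = {v \<in> V. out A (run A adj pn ori (rounds A) v)}"

definition dominating_set :: "'v set \<Rightarrow> ('v \<Rightarrow> 'v \<Rightarrow> bool) \<Rightarrow> 'v set \<Rightarrow> bool" where
  "dominating_set V adj D \<longleftrightarrow> D \<subseteq> V \<and> (\<forall>v\<in>V. v \<in> D \<or> (\<exists>u\<in>D. adj u v))"

definition min_dominating_set :: "'v set \<Rightarrow> ('v \<Rightarrow> 'v \<Rightarrow> bool) \<Rightarrow> 'v set \<Rightarrow> bool" where
  "min_dominating_set V adj D \<longleftrightarrow> dominating_set V adj D \<and>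
     (\<forall>D'. dominating_set V adj D' \<longrightarrow> card D \<le> card D')"

end

theory Submission imports Defs "HOL-Library.Nat_Bijection" begin

lemma imbalance:
  fixes S :: "'v set" and adj ori :: "'v \<Rightarrow> 'v \<Rightarrow> bool"
  assumes fS: "finite S" and fN: "\<And>v. v \<in> S \<Longrightarrow> finite {u. adj v u}"
    and sym: "\<And>u v. adj u v \<Longrightarrow> adj v u"
    and lt: "\<And>v. v \<in> S \<Longrightarrow> card {u. adj v u \<and> ori v u} < card {u. adj v u \<and> ori u v}"
  shows "card S \<le> card {(v,u). v \<in> S \<and> u \<notin> S \<and> adj v u \<and> ori u v}"
proof -
  define In where "In = Sigma S (\<lambda>v. {u. adj v u \<and> ori u v})"
  define Out where "Out = Sigma S (\<lambda>v. {u. adj v u \<and> ori v u})"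
  define Itl where "Itl = {(v,u). v \<in> S \<and> u \<in> S \<and> adj v u \<and> ori u v}"
  define Ext where "Ext = {(v,u). v \<in> S \<and> u \<notin> S \<and> adj v u \<and> ori u v}"
  have f1: "\<And>v. v \<in> S \<Longrightarrow> finite {u. adj v u \<and> ori u v}"
    using fN by (rule rev_finite_subset) auto
  have f2: "\<And>v. v \<in> S \<Longrightarrow> finite {u. adj v u \<and> ori v u}"
    using fN by (rule rev_finite_subset) auto
  have finIn: "finite In" unfolding In_def using fS f1 by auto
  have finOut: "finite Out" unfolding Out_def using fS f2 by auto
  have cIn: "card In = (\<Sum>v\<in>S. card {u. adj v u \<and> ori u v})"
    unfolding In_def using fS f1 by simp
  have cOut: "card Out = (\<Sum>v\<in>S. card {u. adj v u \<and> ori v u})"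
    unfolding Out_def using fS f2 by simp
  have "(\<Sum>v\<in>S. card {u. adj v u \<and> ori v u} + 1) \<le> (\<Sum>v\<in>S. card {u. adj v u \<and> ori u v})"
    by (rule sum_mono) (simp add: lt Suc_leI)
  moreover have "(\<Sum>v\<in>S. card {u. adj v u \<and> ori v u} + 1) = (\<Sum>v\<in>S. card {u. adj v u \<and> ori v u}) + card S"
    by (simp only: sum.distrib card_eq_sum)
  ultimately have A: "card Out + card S \<le> card In" using cIn cOut by simp
  have split: "In = Itl \<union> Ext" "Itl \<inter> Ext = {}"
    unfolding In_def Itl_def Ext_def by auto
  have finI: "finite Itl" "finite Ext" using finIn split by auto
  have cs: "card In = card Itl + card Ext"
    using split finI by (simp add: card_Un_disjoint)
  have "card Itl \<le> card Out"
  proof (rule card_inj_on_le[where f = "\<lambda>(v,u). (u,v)"])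
    show "inj_on (\<lambda>(v, u). (u, v)) Itl" by (auto simp: inj_on_def)
    show "(\<lambda>(v, u). (u, v)) ` Itl \<subseteq> Out" unfolding Itl_def Out_def using sym by auto
    show "finite Out" by (rule finOut)
  qed
  then show ?thesis using A cs unfolding Ext_def by linarith
qed

locale inst =
  fixes V :: "'v set" and adj ori :: "'v \<Rightarrow> 'v \<Rightarrow> bool" and \<Delta> :: nat
  assumes finV: "finite V"
    and adjV: "\<And>u v. adj u v \<Longrightarrow> u \<in> V \<and> v \<in> V"
    and irr: "\<And>u v. adj u v \<Longrightarrow> u \<noteq> v"
    and sym: "\<And>u v. adj u v \<Longrightarrow> adj v u"
    and anti: "\<And>u v. adj u v \<Longrightarrow> (ori u v \<longleftrightarrow> \<not> ori v u)"
    and degb: "\<And>v. v \<in> V \<Longrightarrow> degree adj v \<le> \<Delta>"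
    and oddD: "odd \<Delta>"
begin

definition outd where "outd v = card {u. adj v u \<and> ori v u}"
definition ind where "ind v = card {u. adj v u \<and> ori u v}"
definition isH where "isH v \<longleftrightarrow> degree adj v = \<Delta>"
definition isJ where "isJ v \<longleftrightarrow> isH v \<and> (\<forall>u. adj v u \<longrightarrow> isH u)"
definition isI where "isI v \<longleftrightarrow> 2 * outd v < degree adj v"
definition isO where "isO v \<longleftrightarrow> degree adj v < 2 * outd v"
definition Rs where "Rs = {v \<in> V. isH v \<and> (\<not> isJ v \<or> (isO v \<and> (\<exists>u. adj v u \<and> ori v u \<and> isJ u \<and> isI u)))}"

lemma finN: "finite {u. adj v u}"
proof -
  have "{u. adj v u} \<subseteq> V" using adjV by blast
  then show ?thesis using finV by (rule finite_subset)
qed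

lemma deg_split: "outd v + ind v = degree adj v"
proof -
  define A where "A = {u. adj v u \<and> ori v u}"
  define B where "B = {u. adj v u \<and> ori u v}"
  have eq: "{u. adj v u} = A \<union> B"
  proof (rule set_eqI)
    fix u show "u \<in> {u. adj v u} \<longleftrightarrow> u \<in> A \<union> B"
      unfolding A_def B_def using anti[of v u] by auto
  qed
  have dj: "A \<inter> B = {}"
  proof (rule equals0I)
    fix u assume "u \<in> A \<inter> B"
    then show False unfolding A_def B_def using anti[of v u] by auto
  qed
  have fA: "finite A" unfolding A_def using finN by (rule rev_finite_subset) auto
  have fB: "finite B" unfolding B_def using finN by (rule rev_finite_subset) auto
  have "card {u. adj v u} = card A + card B"
    unfolding eq using fA fB dj by (rule card_Un_disjoint)
  then show ?thesis unfolding outd_def ind_def degree_def A_def B_def by simp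
qed

lemma I_iff: "isI v \<longleftrightarrow> outd v < ind v"
  using deg_split[of v] unfolding isI_def by linarith

lemma O_iff: "isO v \<longleftrightarrow> ind v < outd v"
  using deg_split[of v] unfolding isO_def by linarith

lemma H_IO: assumes "isH v" shows "isI v \<or> isO v"
proof -
  have "2 * outd v \<noteq> degree adj v" proof
    assume "2 * outd v = degree adj v"
    then have "even \<Delta>" using assms unfolding isH_def by (metis dvd_triv_left)
    then show False using oddD by simp
  qed
  then show ?thesis unfolding isI_def isO_def by linarith
qed

lemma not_IO: "\<not> (isI v \<and> isO v)"
  unfolding isI_def isO_def by linarith

lemma Rs_sub: "Rs \<subseteq> V" unfolding Rs_def by auto

lemma dominating: "dominating_set V adj (V - Rs)"
  unfolding dominating_set_def
proof (intro conjI ballI)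
  show "V - Rs \<subseteq> V" by auto
  fix v assume vV: "v \<in> V"
  show "v \<in> V - Rs \<or> (\<exists>u\<in>V - Rs. adj u v)"
  proof (cases "v \<in> Rs")
    case False then show ?thesis using vV by auto
  next
    case True
    then have Hv: "isH v" and c: "\<not> isJ v \<or> (isO v \<and> (\<exists>u. adj v u \<and> ori v u \<and> isJ u \<and> isI u))"
      unfolding Rs_def by auto
    show ?thesis
    proof (cases "isJ v")
      case False
      then obtain u where u: "adj v u" "\<not> isH u" using Hv unfolding isJ_def by auto
      then have "u \<in> V - Rs" "adj u v" using adjV[OF u(1)] sym[OF u(1)] unfolding Rs_def by auto
      then show ?thesis by blast
    next
      case True
      then obtain u where u: "adj v u" "isJ u" "isI u" using c by auto
      then have "u \<notin> Rs" using not_IO unfolding Rs_def by auto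
      then have "u \<in> V - Rs" "adj u v" using adjV[OF u(1)] sym[OF u(1)] by auto
      then show ?thesis by blast
    qed
  qed
qed

definition Ls where "Ls = {v \<in> V. \<not> isH v \<and> (\<exists>u. adj v u \<and> isH u)}"
definition Hs where "Hs = {v \<in> V. isH v}"
definition JI where "JI = {v \<in> V. isJ v \<and> isI v}"
definition Qs where "Qs = {v \<in> V. isJ v \<and> \<not> isI v \<and> v \<notin> Rs}"
definition Bs where "Bs = Hs \<union> Ls"

lemma J_H: "isJ v \<Longrightarrow> isH v" unfolding isJ_def by auto

lemma card_bound: "card Ls + card JI + card Qs \<le> \<Delta> * card Rs"
proof -
  define P where "P = Sigma Rs (\<lambda>r. {u. adj r u})"
  define X1 where "X1 = {(v,u). v \<in> JI \<and> u \<notin> JI \<and> adj v u \<and> ori u v}"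
  define X2 where "X2 = {(v,u). v \<in> Qs \<and> u \<notin> Qs \<and> adj v u \<and> ori v u}"
  define X3 where "X3 = {(r,v). r \<in> Rs \<and> v \<in> Ls \<and> adj r v}"
  define sw where "sw = (\<lambda>(v::'v,u::'v). (u,v))"
  have finRs: "finite Rs" using finV Rs_sub by (rule rev_finite_subset)
  have finP: "finite P" unfolding P_def using finRs finN by auto
  have cP: "card P = (\<Sum>r\<in>Rs. degree adj r)" unfolding P_def degree_def using finRs finN by simp
  have "card P \<le> \<Delta> * card Rs"
  proof -
    have "(\<Sum>r\<in>Rs. degree adj r) \<le> (\<Sum>r\<in>Rs. \<Delta>)"
      by (rule sum_mono) (use degb Rs_sub in auto)
    then show ?thesis using cP by (simp add: mult.commute)
  qed
  have c1: "card JI \<le> card X1" unfolding X1_def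
  proof (rule imbalance)
    show "finite JI" using finV unfolding JI_def by auto
    show "\<And>v. v \<in> JI \<Longrightarrow> finite {u. adj v u}" by (rule finN)
    show "\<And>u v. adj u v \<Longrightarrow> adj v u" by (rule sym)
    show "\<And>v. v \<in> JI \<Longrightarrow> card {u. adj v u \<and> ori v u} < card {u. adj v u \<and> ori u v}"
      using I_iff unfolding JI_def outd_def ind_def by auto
  qed
  have c2: "card Qs \<le> card X2"
  proof -
    have "card Qs \<le> card {(v,u). v \<in> Qs \<and> u \<notin> Qs \<and> adj v u \<and> (\<lambda>a b. ori b a) u v}"
    proof (rule imbalance)
      show "finite Qs" using finV unfolding Qs_def by auto
      show "\<And>v. v \<in> Qs \<Longrightarrow> finite {u. adj v u}" by (rule finN)
      show "\<And>u v. adj u v \<Longrightarrow> adj v u" by (rule sym)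
      fix v assume "v \<in> Qs"
      then have "isO v" using H_IO J_H unfolding Qs_def by blast
      then show "card {u. adj v u \<and> ori u v} < card {u. adj v u \<and> ori v u}"
        using O_iff unfolding outd_def ind_def by auto
    qed
    then show ?thesis unfolding X2_def by simp
  qed
  have c3: "card Ls \<le> card X3"
  proof -
    have "Ls \<subseteq> snd ` X3"
    proof
      fix v assume v: "v \<in> Ls"
      then obtain u where u: "adj v u" "isH u" and nH: "\<not> isH v" unfolding Ls_def by auto
      have au: "adj u v" using sym[OF u(1)] .
      have "u \<in> V" using adjV[OF u(1)] by simp
      moreover have "\<not> isJ u" using au nH unfolding isJ_def by auto
      ultimately have "u \<in> Rs" using u unfolding Rs_def by auto
      then have "(u,v) \<in> X3" using v au unfolding X3_def by auto
      then show "v \<in> snd ` X3" by force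
    qed
    moreover have "finite X3"
      by (rule finite_subset[of _ "V \<times> V"]) (use finV Rs_sub in \<open>auto simp: X3_def Ls_def\<close>)
    ultimately show ?thesis by (meson card_image_le finite_imageI card_mono order_trans)
  qed
  have injsw: "\<And>X. inj_on sw X" unfolding sw_def by (auto simp: inj_on_def)
  have Y1: "sw ` X1 \<subseteq> P \<inter> {p. snd p \<in> JI}"
  proof
    fix p assume "p \<in> sw ` X1"
    then obtain v u where vu: "v \<in> JI" "u \<notin> JI" "adj v u" "ori u v" and p: "p = (u,v)"
      unfolding X1_def sw_def by auto
    have au: "adj u v" using sym[OF vu(3)] .
    have uV: "u \<in> V" using adjV[OF vu(3)] by simp
    have Hu: "isH u" using vu(1,3) unfolding JI_def isJ_def by auto
    have "u \<in> Rs"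
    proof (cases "isJ u")
      case False then show ?thesis using uV Hu unfolding Rs_def by auto
    next
      case True
      then have "\<not> isI u" using vu(2) uV unfolding JI_def by auto
      then have "isO u" using H_IO[OF Hu] by auto
      then show ?thesis using uV Hu au vu(1,4) unfolding Rs_def JI_def by auto
    qed
    then show "p \<in> P \<inter> {p. snd p \<in> JI}" using p au vu(1) unfolding P_def by auto
  qed
  have Y2: "sw ` X2 \<subseteq> P \<inter> {p. snd p \<in> Qs}"
  proof
    fix p assume "p \<in> sw ` X2"
    then obtain v u where vu: "v \<in> Qs" "u \<notin> Qs" "adj v u" "ori v u" and p: "p = (u,v)"
      unfolding X2_def sw_def by auto
    have au: "adj u v" using sym[OF vu(3)] .
    have uV: "u \<in> V" using adjV[OF vu(3)] by simp
    have Hu: "isH u" using vu(1,3) unfolding Qs_def isJ_def by auto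
    have "u \<in> Rs"
    proof (cases "isJ u")
      case False then show ?thesis using uV Hu unfolding Rs_def by auto
    next
      case True
      show ?thesis
      proof (cases "isI u")
        case True
        have vQ: "v \<in> V" "isJ v" "\<not> isI v" "v \<notin> Rs" using vu(1) unfolding Qs_def by auto
        then have "isO v" using H_IO J_H by blast
        then have "v \<in> Rs" using vQ vu(3,4) \<open>isJ u\<close> True J_H unfolding Rs_def by blast
        then show ?thesis using vQ by simp
      next
        case False
        then show ?thesis using vu(2) uV \<open>isJ u\<close> unfolding Qs_def by auto
      qed
    qed
    then show "p \<in> P \<inter> {p. snd p \<in> Qs}" using p au vu(1) unfolding P_def by auto
  qed
  have Y3: "X3 \<subseteq> P \<inter> {p. snd p \<in> Ls}" unfolding X3_def P_def by auto
  have fX1: "finite X1"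
    by (rule finite_subset[of _ "V \<times> V"]) (use finV adjV in \<open>auto simp: X1_def\<close>)
  have fX2: "finite X2"
    by (rule finite_subset[of _ "V \<times> V"]) (use finV adjV in \<open>auto simp: X2_def\<close>)
  have fX3: "finite X3" using Y3 finP by (meson finite_subset inf_le1 order_trans)
  have d12: "sw ` X1 \<inter> sw ` X2 = {}" using Y1 Y2 unfolding JI_def Qs_def by blast
  have d3: "(sw ` X1 \<union> sw ` X2) \<inter> X3 = {}" using Y1 Y2 Y3 unfolding JI_def Qs_def Ls_def
    using J_H by blast
  have "card (sw ` X1 \<union> sw ` X2 \<union> X3) = card X1 + card X2 + card X3"
    using d12 d3 fX1 fX2 fX3 injsw
    by (simp add: card_Un_disjoint card_image)
  moreover have "card (sw ` X1 \<union> sw ` X2 \<union> X3) \<le> card P"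
    by (rule card_mono[OF finP]) (use Y1 Y2 Y3 in blast)
  ultimately show ?thesis using c1 c2 c3 \<open>card P \<le> \<Delta> * card Rs\<close> by linarith
qed


lemma card_Bs: "card Bs \<le> (\<Delta> + 1) * card Rs"
proof -
  have "Hs \<subseteq> Rs \<union> JI \<union> Qs"
  proof
    fix v assume v: "v \<in> Hs"
    show "v \<in> Rs \<union> JI \<union> Qs"
    proof (cases "v \<in> Rs")
      case False
      then have "isJ v" using v unfolding Hs_def Rs_def by auto
      then show ?thesis using v False unfolding Hs_def JI_def Qs_def by auto
    qed simp
  qed
  have fin: "finite Rs" "finite JI" "finite Qs" "finite Ls"
    using finV Rs_sub unfolding JI_def Qs_def Ls_def by (auto intro: rev_finite_subset)
  have "card Hs \<le> card (Rs \<union> JI \<union> Qs)"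
    using \<open>Hs \<subseteq> _\<close> fin by (intro card_mono) auto
  also have "\<dots> \<le> card Rs + card JI + card Qs"
    by (meson card_Un_le add_le_mono order_trans le_refl)
  finally have "card Hs \<le> card Rs + card JI + card Qs" .
  moreover have "card Bs \<le> card Hs + card Ls" unfolding Bs_def by (rule card_Un_le)
  ultimately show ?thesis using card_bound by simp
qed

definition w where "w v = (if v \<in> Bs then \<Delta> else \<Delta> + 1)"

lemma Bs_sub: "Bs \<subseteq> V" unfolding Bs_def Hs_def Ls_def by auto

lemma sum_w: "(\<Sum>v\<in>V. w v) + card Bs = (\<Delta> + 1) * card V"
proof -
  have "(\<Sum>v\<in>V. w v) + (\<Sum>v\<in>V. if v \<in> Bs then 1 else 0) = (\<Sum>v\<in>V. w v + (if v \<in> Bs then 1 else 0))"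
    by (simp add: sum.distrib)
  also have "\<dots> = (\<Sum>v\<in>V. \<Delta> + 1)" by (rule sum.cong) (auto simp: w_def)
  finally have a: "(\<Sum>v\<in>V. w v) + (\<Sum>v\<in>V. if v \<in> Bs then 1 else 0) = (\<Delta> + 1) * card V"
    by (simp add: mult.commute)
  have "(\<Sum>v\<in>V. if v \<in> Bs then 1 else 0) = (\<Sum>v\<in>V \<inter> Bs. (1::nat))"
    by (rule sum.inter_restrict[OF finV, symmetric])
  also have "\<dots> = card Bs" using Bs_sub by (simp add: Int_absorb1)
  finally show ?thesis using a by simp
qed

lemma lower:
  assumes dom: "dominating_set V adj Ds"
  shows "(\<Sum>v\<in>V. w v) \<le> \<Delta> * (\<Delta> + 1) * card Ds"
proof -
  have DsV: "Ds \<subseteq> V" using dom unfolding dominating_set_def by auto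
  have finDs: "finite Ds" using finite_subset[OF DsV finV] .
  have "(\<Sum>v\<in>V. w v) \<le> (\<Sum>v\<in>V. \<Sum>s\<in>{s \<in> Ds. s = v \<or> adj s v}. w v)"
  proof (rule sum_mono)
    fix v assume vV: "v \<in> V"
    have "{s \<in> Ds. s = v \<or> adj s v} \<noteq> {}" using dom vV unfolding dominating_set_def by auto
    moreover have "finite {s \<in> Ds. s = v \<or> adj s v}" using finDs by auto
    ultimately have "card {s \<in> Ds. s = v \<or> adj s v} \<ge> 1"
      by (meson card_0_eq less_one not_le)
    then show "w v \<le> (\<Sum>s\<in>{s \<in> Ds. s = v \<or> adj s v}. w v)" by simp
  qed
  also have "\<dots> = (\<Sum>s\<in>Ds. \<Sum>v\<in>{v \<in> V. s = v \<or> adj s v}. w v)"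
    by (rule sum.swap_restrict[OF finV finDs])
  also have "\<dots> \<le> (\<Sum>s\<in>Ds. \<Delta> * (\<Delta> + 1))"
  proof (rule sum_mono)
    fix s assume sD: "s \<in> Ds"
    have sV: "s \<in> V" using sD DsV by auto
    have Ns: "{v \<in> V. s = v \<or> adj s v} = insert s {u. adj s u}" using sV adjV by auto
    have sn: "s \<notin> {u. adj s u}" using irr by auto
    have cN: "card {v \<in> V. s = v \<or> adj s v} = degree adj s + 1"
      unfolding Ns degree_def using finN sn by simp
    have finNs: "finite {v \<in> V. s = v \<or> adj s v}" using finV by auto
    show "(\<Sum>v\<in>{v \<in> V. s = v \<or> adj s v}. w v) \<le> \<Delta> * (\<Delta> + 1)"
    proof (cases "isH s")
      case True
      have "\<forall>v\<in>{v \<in> V. s = v \<or> adj s v}. w v = \<Delta>"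
      proof
        fix v assume v: "v \<in> {v \<in> V. s = v \<or> adj s v}"
        have "v \<in> Bs"
        proof (cases "v = s")
          case True then show ?thesis using sV \<open>isH s\<close> unfolding Bs_def Hs_def by auto
        next
          case False
          then have "adj s v" using v by auto
          then have "adj v s" by (rule sym)
          then show ?thesis using v \<open>isH s\<close> unfolding Bs_def Hs_def Ls_def by auto
        qed
        then show "w v = \<Delta>" unfolding w_def by simp
      qed
      then have "(\<Sum>v\<in>{v \<in> V. s = v \<or> adj s v}. w v) = card {v \<in> V. s = v \<or> adj s v} * \<Delta>"
        by simp
      then show ?thesis using cN True unfolding isH_def by simp
    next
      case False
      then have "degree adj s < \<Delta>" using degb[OF sV] unfolding isH_def by simp
      have "(\<Sum>v\<in>{v \<in> V. s = v \<or> adj s v}. w v) \<le> of_nat (card {v \<in> V. s = v \<or> adj s v}) * (\<Delta> + 1)"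
        by (rule sum_bounded_above) (simp add: w_def)
      then have "(\<Sum>v\<in>{v \<in> V. s = v \<or> adj s v}. w v) \<le> card {v \<in> V. s = v \<or> adj s v} * (\<Delta> + 1)"
        by simp
      also have "\<dots> \<le> \<Delta> * (\<Delta> + 1)"
      proof -
        have "card {v \<in> V. s = v \<or> adj s v} \<le> \<Delta>" using cN \<open>degree adj s < \<Delta>\<close> by simp
        then show ?thesis by (rule mult_le_mono1)
      qed
      finally show ?thesis .
    qed
  qed
  also have "\<dots> = \<Delta> * (\<Delta> + 1) * card Ds" by (simp add: mult.commute)
  finally show ?thesis .
qed

lemma main_bound:
  assumes dom: "dominating_set V adj Ds"
  shows "card (V - Rs) \<le> \<Delta> * card Ds"
proof -
  define x where "x = card (V - Rs)"
  have cV: "card V = x + card Rs" unfolding x_def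
    using finV Rs_sub by (metis card_Diff_subset card_mono le_add_diff_inverse2 finite_subset)
  have "(\<Delta> + 1) * x + (\<Delta> + 1) * card Rs = (\<Sum>v\<in>V. w v) + card Bs"
    using sum_w cV by (simp add: algebra_simps)
  then have "(\<Delta> + 1) * x \<le> (\<Sum>v\<in>V. w v)" using card_Bs by linarith
  also have "\<dots> \<le> (\<Delta> + 1) * (\<Delta> * card Ds)" using lower[OF dom] by (simp add: algebra_simps)
  finally have "(\<Delta> + 1) * x \<le> (\<Delta> + 1) * (\<Delta> * card Ds)" .
  then show ?thesis unfolding x_def by (rule mult_left_le_imp_le) simp
qed

end

definition b2n :: "bool \<Rightarrow> nat" where "b2n b = (if b then 1 else 0)"
definition dg0 :: "nat \<Rightarrow> nat" where "dg0 s = length (list_decode s)"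
definition oc0 :: "nat \<Rightarrow> nat" where "oc0 s = length (filter (\<lambda>x. x = 1) (list_decode s))"
definition hH :: "nat \<Rightarrow> nat \<Rightarrow> bool" where "hH D s \<longleftrightarrow> dg0 s = D"
definition hI :: "nat \<Rightarrow> bool" where "hI s \<longleftrightarrow> 2 * oc0 s < dg0 s"
definition hO :: "nat \<Rightarrow> bool" where "hO s \<longleftrightarrow> dg0 s < 2 * oc0 s"
definition inner1 :: "nat \<Rightarrow> nat \<Rightarrow> bool" where
  "inner1 D s1 \<longleftrightarrow> hH D (fst (prod_decode s1)) \<and> (\<forall>x\<in>set (list_decode (snd (prod_decode s1))). hH D x)"
definition decide :: "nat \<Rightarrow> nat \<Rightarrow> bool" where
  "decide D s2 = (let s1 = fst (prod_decode s2); ns = list_decode (snd (prod_decode s2));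
      s0 = fst (prod_decode s1); fl = list_decode s0 in
    \<not> (hH D s0 \<and> (\<not> inner1 D s1 \<or> (hO s0 \<and> (\<exists>j<length fl. fl ! j = 1 \<and> inner1 D (ns ! j) \<and> hI (fst (prod_decode (ns ! j))))))))"
definition Alg :: "nat \<Rightarrow> (nat, nat) local_alg" where
  "Alg D = \<lparr>rounds = 2, start = (\<lambda>bs. list_encode (map b2n bs)), send = (\<lambda>s i. s),
     step = (\<lambda>s ms. prod_encode (s, list_encode ms)), out = decide D\<rparr>"

lemma dec0: "list_decode (run (Alg D) adj pn ori 0 v) = map (\<lambda>i. b2n (ori v (pn v i))) [0..<degree adj v]"
  by (simp add: Alg_def)
lemma dec1: "prod_decode (run (Alg D) adj pn ori (Suc 0) v) = (run (Alg D) adj pn ori 0 v,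
    list_encode (map (\<lambda>j. run (Alg D) adj pn ori 0 (pn v j)) [0..<degree adj v]))"
  by (subst run.simps(2)) (simp add: Alg_def del: run.simps)
lemma dec2: "prod_decode (run (Alg D) adj pn ori (Suc (Suc 0)) v) = (run (Alg D) adj pn ori (Suc 0) v,
    list_encode (map (\<lambda>j. run (Alg D) adj pn ori (Suc 0) (pn v j)) [0..<degree adj v]))"
  by (subst run.simps(2)) (simp add: Alg_def del: run.simps)

lemma dg0_run0: "dg0 (run (Alg D) adj pn ori 0 v) = degree adj v"
  unfolding dg0_def dec0 by simp

declare run.simps[simp del]

locale inst2 = inst V adj ori \<Delta> for V :: "'v set" and adj ori \<Delta> +
  fixes pn :: "'v \<Rightarrow> nat \<Rightarrow> 'v"
  assumes bij: "\<And>v. v \<in> V \<Longrightarrow> bij_betw (pn v) {..<degree adj v} {u. adj v u}"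
begin

abbreviation "r0 \<equiv> run (Alg \<Delta>) adj pn ori 0"
abbreviation "r1 \<equiv> run (Alg \<Delta>) adj pn ori (Suc 0)"
abbreviation "r2 \<equiv> run (Alg \<Delta>) adj pn ori (Suc (Suc 0))"

lemma img: "v \<in> V \<Longrightarrow> pn v ` {..<degree adj v} = {u. adj v u}"
  using bij by (simp add: bij_betw_def)

lemma ex_port: assumes vV: "v \<in> V" shows "(\<exists>j<degree adj v. P (pn v j)) \<longleftrightarrow> (\<exists>u. adj v u \<and> P u)"
proof
  assume "\<exists>j<degree adj v. P (pn v j)"
  then obtain j where "j < degree adj v" "P (pn v j)" by blast
  moreover then have "adj v (pn v j)" using img[OF vV] by blast
  ultimately show "\<exists>u. adj v u \<and> P u" by blast
next
  assume "\<exists>u. adj v u \<and> P u"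
  then obtain u where u: "adj v u" "P u" by blast
  then have "u \<in> pn v ` {..<degree adj v}" using img[OF vV] by simp
  then obtain j where "j < degree adj v" "u = pn v j" by auto
  then show "\<exists>j<degree adj v. P (pn v j)" using u by blast
qed

lemma all_port: "v \<in> V \<Longrightarrow> (\<forall>j<degree adj v. P (pn v j)) \<longleftrightarrow> (\<forall>u. adj v u \<longrightarrow> P u)"
  using ex_port[of v "\<lambda>u. \<not> P u"] by blast

lemma card_port: assumes vV: "v \<in> V"
  shows "card {i. i < degree adj v \<and> P (pn v i)} = card {u. adj v u \<and> P u}"
proof -
  have inj0: "inj_on (pn v) {..<degree adj v}" using bij[OF vV] by (simp add: bij_betw_def)
  have inj: "inj_on (pn v) {i. i < degree adj v \<and> P (pn v i)}"
    by (rule inj_on_subset[OF inj0]) auto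
  have "pn v ` {i. i < degree adj v \<and> P (pn v i)} = {u. adj v u \<and> P u}"
  proof (rule set_eqI)
    fix u show "u \<in> pn v ` {i. i < degree adj v \<and> P (pn v i)} \<longleftrightarrow> u \<in> {u. adj v u \<and> P u}"
      using ex_port[OF vV, of "\<lambda>x. x = u \<and> P x"] by auto
  qed
  then show ?thesis using card_image[OF inj] by simp
qed

lemma oc0_run0: assumes vV: "v \<in> V" shows "oc0 (r0 v) = outd v"
proof -
  have "oc0 (r0 v) = card {i. i < degree adj v \<and> ori v (pn v i)}"
    unfolding oc0_def dec0 length_filter_conv_card
    by (rule arg_cong[where f = card]) (auto simp: b2n_def split: if_splits)
  then show ?thesis using card_port[OF vV] unfolding outd_def by simp
qed

lemma hH_r0: "hH \<Delta> (r0 v) \<longleftrightarrow> isH v"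
  unfolding hH_def isH_def dg0_run0 ..

lemma hI_r0: "v \<in> V \<Longrightarrow> hI (r0 v) \<longleftrightarrow> isI v"
  unfolding hI_def isI_def dg0_run0 by (simp only: oc0_run0)

lemma hO_r0: "v \<in> V \<Longrightarrow> hO (r0 v) \<longleftrightarrow> isO v"
  unfolding hO_def isO_def dg0_run0 by (simp only: oc0_run0)

lemma pnV: "v \<in> V \<Longrightarrow> j < degree adj v \<Longrightarrow> pn v j \<in> V \<and> adj v (pn v j)"
  using img[of v] adjV by blast

lemma inner1_r1: assumes vV: "v \<in> V" shows "inner1 \<Delta> (r1 v) \<longleftrightarrow> isJ v"
proof -
  have "(\<forall>x\<in>set (map (\<lambda>j. r0 (pn v j)) [0..<degree adj v]). hH \<Delta> x) \<longleftrightarrow> (\<forall>j<degree adj v. isH (pn v j))"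
    by (auto simp: hH_r0)
  then have "inner1 \<Delta> (r1 v) \<longleftrightarrow> isH v \<and> (\<forall>j<degree adj v. isH (pn v j))"
    unfolding inner1_def dec1 fst_conv snd_conv list_encode_inverse hH_r0 by simp
  also have "\<dots> \<longleftrightarrow> isJ v" unfolding isJ_def using all_port[OF vV, of isH] by simp
  finally show ?thesis .
qed

lemma decide_r2: assumes vV: "v \<in> V" shows "decide \<Delta> (r2 v) \<longleftrightarrow> v \<notin> Rs"
proof -
  define ns where "ns = map (\<lambda>j. r1 (pn v j)) [0..<degree adj v]"
  define fl where "fl = list_decode (r0 v)"
  have lfl: "length fl = degree adj v" unfolding fl_def dec0 by simp
  have "\<And>j. j < degree adj v \<Longrightarrow> (fl ! j = 1 \<and> inner1 \<Delta> (ns ! j) \<and> hI (fst (prod_decode (ns ! j))))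
         \<longleftrightarrow> (ori v (pn v j) \<and> isJ (pn v j) \<and> isI (pn v j))"
  proof -
    fix j assume j: "j < degree adj v"
    have pV: "pn v j \<in> V" using pnV[OF vV j] by simp
    have "ns ! j = r1 (pn v j)" unfolding ns_def using j by simp
    moreover have "fl ! j = 1 \<longleftrightarrow> ori v (pn v j)" unfolding fl_def dec0 using j by (simp add: b2n_def)
    moreover have "fst (prod_decode (r1 (pn v j))) = r0 (pn v j)" unfolding dec1 by simp
    ultimately show "?thesis j" using inner1_r1[OF pV] hI_r0[OF pV] by simp
  qed
  then have "(\<exists>j<length fl. fl ! j = 1 \<and> inner1 \<Delta> (ns ! j) \<and> hI (fst (prod_decode (ns ! j))))
        \<longleftrightarrow> (\<exists>j<degree adj v. ori v (pn v j) \<and> isJ (pn v j) \<and> isI (pn v j))"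
    using lfl by auto
  also have "\<dots> \<longleftrightarrow> (\<exists>u. adj v u \<and> ori v u \<and> isJ u \<and> isI u)"
    by (rule ex_port[OF vV])
  finally have ex: "(\<exists>j<length fl. fl ! j = 1 \<and> inner1 \<Delta> (ns ! j) \<and> hI (fst (prod_decode (ns ! j))))
        \<longleftrightarrow> (\<exists>u. adj v u \<and> ori v u \<and> isJ u \<and> isI u)" .
  have fst1: "fst (prod_decode (r1 v)) = r0 v" unfolding dec1 by simp
  have d: "decide \<Delta> (r2 v) = (\<not> (hH \<Delta> (r0 v) \<and> (\<not> inner1 \<Delta> (r1 v) \<or> (hO (r0 v) \<and>
      (\<exists>j<length fl. fl ! j = 1 \<and> inner1 \<Delta> (ns ! j) \<and> hI (fst (prod_decode (ns ! j))))))))"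
    unfolding decide_def Let_def dec2 fst_conv snd_conv list_encode_inverse fst1 ns_def fl_def ..
  show ?thesis
    unfolding d ex hH_r0 hO_r0[OF vV] inner1_r1[OF vV] Rs_def using vV by auto
qed

lemma alg_out: "alg_output (Alg \<Delta>) V adj pn ori = V - Rs"
proof -
  have r: "rounds (Alg \<Delta>) = Suc (Suc 0)" by (simp add: Alg_def)
  have o: "out (Alg \<Delta>) = decide \<Delta>" by (simp add: Alg_def)
  show ?thesis unfolding alg_output_def r o using decide_r2 by auto
qed

end

theorem theorem8:
  fixes \<Delta> :: nat
  assumes "odd \<Delta>"
  shows "\<exists>A :: (nat, nat) local_alg.
    \<forall>(V :: nat set) adj pn ori.
      valid_instance V adj pn ori \<and> (\<forall>v\<in>V. \<exists>u. adj v u) \<and> (\<forall>v\<in>V. degree adj v \<le> \<Delta>) \<longrightarrow>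
      dominating_set V adj (alg_output A V adj pn ori) \<and>
      (\<forall>Ds. min_dominating_set V adj Ds \<longrightarrow> card (alg_output A V adj pn ori) \<le> \<Delta> * card Ds)"
proof (intro exI[of _ "Alg \<Delta>"] allI impI)
  fix V :: "nat set" and adj pn ori
  assume h: "valid_instance V adj pn ori \<and> (\<forall>v\<in>V. \<exists>u. adj v u) \<and> (\<forall>v\<in>V. degree adj v \<le> \<Delta>)"
  have fin: "finite V"
    and A: "\<forall>u v. adj u v \<longrightarrow> u \<in> V \<and> v \<in> V \<and> u \<noteq> v \<and> adj v u"
    and Bj: "\<forall>v\<in>V. bij_betw (pn v) {..<degree adj v} {u. adj v u}"
    and Or: "\<forall>u v. adj u v \<longrightarrow> (ori u v \<longleftrightarrow> \<not> ori v u)"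
    and Dg: "\<forall>v\<in>V. degree adj v \<le> \<Delta>"
    using h unfolding valid_instance_def by blast+
  interpret inst2 V adj ori \<Delta> pn
  proof unfold_locales
    show "finite V" by (rule fin)
    show "\<And>u v. adj u v \<Longrightarrow> u \<in> V \<and> v \<in> V" using A by blast
    show "\<And>u v. adj u v \<Longrightarrow> u \<noteq> v" using A by blast
    show "\<And>u v. adj u v \<Longrightarrow> adj v u" using A by blast
    show "\<And>u v. adj u v \<Longrightarrow> (ori u v \<longleftrightarrow> \<not> ori v u)" using Or by blast
    show "\<And>v. v \<in> V \<Longrightarrow> degree adj v \<le> \<Delta>" using Dg by blast
    show "odd \<Delta>" by (rule assms)
    show "\<And>v. v \<in> V \<Longrightarrow> bij_betw (pn v) {..<degree adj v} {u. adj v u}" using Bj by blast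
  qed
  show "dominating_set V adj (alg_output (Alg \<Delta>) V adj pn ori) \<and>
      (\<forall>Ds. min_dominating_set V adj Ds \<longrightarrow> card (alg_output (Alg \<Delta>) V adj pn ori) \<le> \<Delta> * card Ds)"
    unfolding alg_out using dominating main_bound unfolding min_dominating_set_def by blast
qed

end
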